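(* For each $n\ge1$ there is a bijection $\varphi$ from the set of plane trees with $n$ edges to $\mathfrak S_n(321)$ such that, for every such tree $T$ and $\pi=\varphi(T)$: (1) the number of young leaves of $T$ equals the number of indices $i\in\{1,\dots,n-1\}$ such that both $\pi_i$ and $\pi_{i+1}$ are weak excedances of $\pi$; (2) the number of old leaves of $T$ equals the number of weak excedances $\pi_i$ of $\pi$ that are not followed by another weak excedance (i.e. $i=n$, or $\pi_{i+1}$ is not a weak excedance).
   Context: A plane tree is a rooted tree in which the children of each vertex are linearly ordered. A leaf is a vertex with no children; the one-vertex tree has no leaves. A leaf is old if it is the leftmost child of its parent, young otherwise. $\mathfrak S_n(321)$ is the set of permutations $\pi=\pi_1\cdots\pi_n$ of $\{1,\dots,n\}$ having no indices $a<b<c$ with $\pi_a>\pi_b>\pi_c$. An entry $\pi_i$ is a weak excedance if $\pi_i\ge i$ and a deficiency if $\pi_i<i$. *)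

theory Defs
  imports "HOL-Combinatorics.Permutations"
begin

datatype ptree = Node "ptree list"

fun children :: "ptree \<Rightarrow> ptree list" where
  "children (Node ts) = ts"

fun edges :: "ptree \<Rightarrow> nat" where
  "edges (Node ts) = (\<Sum>t\<leftarrow>ts. Suc (edges t))"

text \<open>The root itself is never a leaf.\<close>
fun young_leaves :: "ptree \<Rightarrow> nat" where
  "young_leaves (Node ts) =
     length (filter (\<lambda>t. children t = []) (drop 1 ts)) + (\<Sum>t\<leftarrow>ts. young_leaves t)"

fun old_leaves :: "ptree \<Rightarrow> nat" where
  "old_leaves (Node ts) =
     (case ts of [] \<Rightarrow> 0 | t # _ \<Rightarrow> (if children t = [] then 1 else 0))
     + (\<Sum>t\<leftarrow>ts. old_leaves t)"

definition avoids321 :: "nat \<Rightarrow> (nat \<Rightarrow> nat) \<Rightarrow> bool" where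
  "avoids321 n p \<longleftrightarrow>
     \<not> (\<exists>a b c. 1 \<le> a \<and> a < b \<and> b < c \<and> c \<le> n \<and> p a > p b \<and> p b > p c)"

definition perms321 :: "nat \<Rightarrow> (nat \<Rightarrow> nat) set" where
  "perms321 n = {p. p permutes {1..n} \<and> avoids321 n p}"

definition weak_exc :: "(nat \<Rightarrow> nat) \<Rightarrow> nat \<Rightarrow> bool" where
  "weak_exc p i \<longleftrightarrow> p i \<ge> i"

end

theory Submission
  imports Defs
begin

datatype letter = LU | LD | LA | LB

fun wb :: "letter \<Rightarrow> bool" where
  "wb LU = True" | "wb LA = True" | "wb LD = False" | "wb LB = False"
fun vb :: "letter \<Rightarrow> bool" where
  "vb LD = True" | "vb LA = True" | "vb LU = False" | "vb LB = False"

fun path :: "nat \<Rightarrow> letter list \<Rightarrow> nat \<Rightarrow> bool" where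
  "path h [] h' = (h = h')"
| "path h (LU # xs) h' = path (Suc h) xs h'"
| "path h (LD # xs) h' = (0 < h \<and> path (h - 1) xs h')"
| "path h (LA # xs) h' = path h xs h'"
| "path h (LB # xs) h' = path h xs h'"

lemma path_append: "path h (xs @ ys) h'' \<longleftrightarrow> (\<exists>h'. path h xs h' \<and> path h' ys h'')"
proof (induction xs arbitrary: h)
  case Nil then show ?case by simp
next
  case (Cons x xs) then show ?case by (cases x) auto
qed

lemma path_det: "path h xs a \<Longrightarrow> path h xs b \<Longrightarrow> a = b"
proof (induction xs arbitrary: h)
  case Nil then show ?case by simp
next
  case (Cons x xs) then show ?case by (cases x) auto
qed

lemma path_shift: "path h xs h' \<Longrightarrow> path (h + c) xs (h' + c)"
proof (induction xs arbitrary: h)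
  case Nil then show ?case by simp
next
  case (Cons x xs)
  show ?case
  proof (cases x)
    case LU then show ?thesis using Cons.IH[of "Suc h"] Cons.prems by simp
  next
    case LD then show ?thesis using Cons.IH[of "h - 1"] Cons.prems by simp
  qed (use Cons in auto)
qed

lemma path_split: "path 0 xs (Suc g) \<Longrightarrow> \<exists>ys zs. xs = ys @ LU # zs \<and> path 0 ys g \<and> path 0 zs 0"
proof (induction "length xs" arbitrary: xs g rule: less_induct)
  case less
  have "xs \<noteq> []" using less.prems by auto
  then obtain xs' x where xs: "xs = xs' @ [x]" by (metis rev_exhaust)
  then obtain h where h1: "path 0 xs' h" and h2: "path h [x] (Suc g)"
    using less.prems path_append by blast
  show ?case
  proof (cases x)
    case LU
    then have "h = g" using h2 by simp
    then show ?thesis using xs h1 LU by (intro exI[of _ xs'] exI[of _ "[]"]) simp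
  next
    case LA
    then have "h = Suc g" using h2 by simp
    then obtain ys zs where "xs' = ys @ LU # zs" "path 0 ys g" "path 0 zs 0"
      using less.hyps[of xs' g] h1 xs by auto
    then show ?thesis using xs LA
      by (intro exI[of _ ys] exI[of _ "zs @ [LA]"]) (auto simp: path_append)
  next
    case LB
    then have "h = Suc g" using h2 by simp
    then obtain ys zs where "xs' = ys @ LU # zs" "path 0 ys g" "path 0 zs 0"
      using less.hyps[of xs' g] h1 xs by auto
    then show ?thesis using xs LB
      by (intro exI[of _ ys] exI[of _ "zs @ [LB]"]) (auto simp: path_append)
  next
    case LD
    then have "h = Suc (Suc g)" using h2 by (cases h) auto
    then obtain ys1 zs1 where a: "xs' = ys1 @ LU # zs1" "path 0 ys1 (Suc g)" "path 0 zs1 0"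
      using less.hyps[of xs' "Suc g"] h1 xs by auto
    then obtain ys zs2 where b: "ys1 = ys @ LU # zs2" "path 0 ys g" "path 0 zs2 0"
      using less.hyps[of ys1 g] xs by auto
    have "path 1 zs1 1" using path_shift[OF a(3), of 1] by simp
    then have "path 0 (zs2 @ LU # zs1 @ [LD]) 0" using b(3)
      by (auto simp: path_append)
    then show ?thesis using xs LD a b
      by (intro exI[of _ ys] exI[of _ "zs2 @ LU # zs1 @ [LD]"]) auto
  qed
qed

lemma split_unique_aux:
  assumes e: "ys @ LU # zs = ys' @ LU # zs'" and l: "length ys < length ys'"
    and p1: "path 0 ys 0" and p2: "path 0 zs 0" and p3: "path 0 ys' 0"
  shows False
proof -
  define j where "j = length ys' - length ys - 1"
  have "ys' = take (length ys') (ys @ LU # zs)" using e by simp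
  also have "\<dots> = ys @ take (length ys' - length ys) (LU # zs)" using l by simp
  also have "\<dots> = ys @ LU # take j zs" using l unfolding j_def
    by (cases "length ys' - length ys") auto
  finally have ys': "ys' = ys @ LU # take j zs" .
  obtain h1 where "path 0 ys h1" "path h1 (LU # take j zs) 0"
    using p3 ys' path_append by blast
  then have "h1 = 0" using p1 path_det by blast
  then have q1: "path 1 (take j zs) 0" using \<open>path h1 (LU # take j zs) 0\<close> by simp
  obtain h2 where "path 0 (take j zs) h2" using p2 path_append
    by (metis append_take_drop_id)
  then have "path 1 (take j zs) (h2 + 1)" using path_shift[of 0 _ h2 1] by simp
  then show False using q1 path_det by fastforce
qed

lemma split_unique:
  assumes e: "ys @ LU # zs = ys' @ LU # zs'"
    and "path 0 ys 0" "path 0 zs 0" "path 0 ys' 0" "path 0 zs' 0"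
  shows "ys = ys' \<and> zs = zs'"
proof -
  have "\<not> length ys < length ys'" using split_unique_aux assms by blast
  moreover have "\<not> length ys' < length ys" using split_unique_aux[of ys' zs' ys zs] assms by metis
  ultimately have "length ys = length ys'" by simp
  then show ?thesis using e by auto
qed

fun enc :: "ptree \<Rightarrow> letter list" where
  "enc (Node []) = []"
| "enc (Node [Node []]) = []"
| "enc (Node (Node [] # t # ts)) = enc (Node (t # ts)) @ [LA]"
| "enc (Node [Node (f # fs)]) = enc (Node (f # fs)) @ [LB]"
| "enc (Node (Node (f # fs) # t # ts)) = enc (Node (t # ts)) @ [LU] @ enc (Node (f # fs)) @ [LD]"

lemma edges_pos_cases:
  assumes "1 \<le> edges T"
  shows "\<exists>t ts. T = Node (t # ts)"
  using assms by (cases T; cases "children T") auto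

lemma enc_props:
  "1 \<le> edges T \<Longrightarrow> path 0 (enc T) 0 \<and> Suc (length (enc T)) = edges T"
proof (induction T rule: enc.induct)
  case (5 f fs t ts)
  have "path 0 (enc (Node (t # ts))) 0" "path 0 (enc (Node (f # fs))) 0"
    "Suc (length (enc (Node (t # ts)))) = edges (Node (t # ts))"
    "Suc (length (enc (Node (f # fs)))) = edges (Node (f # fs))"
    using 5 by auto
  moreover have "path 1 (enc (Node (f # fs))) 1"
    using path_shift[OF \<open>path 0 (enc (Node (f # fs))) 0\<close>, of 1] by simp
  ultimately show ?case by (auto simp: path_append)
qed (auto simp: path_append)

lemma enc_inj:
  "1 \<le> edges T1 \<Longrightarrow> 1 \<le> edges T2 \<Longrightarrow> enc T1 = enc T2 \<Longrightarrow> T1 = T2"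
proof (induction T1 arbitrary: T2 rule: enc.induct)
  case 1 then show ?case by simp
next
  case 2
  then show ?case by (cases T2 rule: enc.cases) auto
next
  case (3 t ts)
  show ?case
  proof (cases T2 rule: enc.cases)
    case (3 t' ts')
    then have "Node (t # ts) = Node (t' # ts')" using "3.IH"[of "Node (t' # ts')"] "3.prems" by simp
    then show ?thesis using 3 by simp
  qed (use "3.prems" in auto)
next
  case (4 f fs)
  show ?case
  proof (cases T2 rule: enc.cases)
    case (4 f' fs')
    then have "Node (f # fs) = Node (f' # fs')" using "4.IH"[of "Node (f' # fs')"] "4.prems" by simp
    then show ?thesis using 4 by simp
  qed (use "4.prems" in auto)
next
  case (5 f fs t ts)
  show ?case
  proof (cases T2 rule: enc.cases)
    case (5 f' fs' t' ts')
    let ?A = "enc (Node (t # ts))" and ?B = "enc (Node (f # fs))"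
    let ?A' = "enc (Node (t' # ts'))" and ?B' = "enc (Node (f' # fs'))"
    have "(?A @ LU # ?B) @ [LD] = (?A' @ LU # ?B') @ [LD]"
      using "5.prems"(3) 5 by simp
    then have e: "?A @ LU # ?B = ?A' @ LU # ?B'" by (simp only: append1_eq_conv)
    have "?A = ?A' \<and> ?B = ?B'"
      by (rule split_unique[OF e]) (auto simp: enc_props)
    then have "Node (t # ts) = Node (t' # ts')" "Node (f # fs) = Node (f' # fs')"
      using "5.IH"(1)[of "Node (t' # ts')"] "5.IH"(2)[of "Node (f' # fs')"] by auto
    then show ?thesis using 5 by simp
  qed (use "5.prems" in auto)
qed

lemma enc_surj:
  "path 0 xs 0 \<Longrightarrow> \<exists>T. edges T = Suc (length xs) \<and> enc T = xs"
proof (induction "length xs" arbitrary: xs rule: less_induct)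
  case less
  show ?case
  proof (cases "xs = []")
    case True
    then show ?thesis by (intro exI[of _ "Node [Node []]"]) simp
  next
    case False
    then obtain xs' x where xs: "xs = xs' @ [x]" by (metis rev_exhaust)
    then obtain h where h1: "path 0 xs' h" and h2: "path h [x] 0"
      using less.prems path_append by blast
    show ?thesis
    proof (cases x)
      case LU then show ?thesis using h2 by simp
    next
      case LA
      then have "h = 0" using h2 by simp
      then obtain T' where T': "edges T' = Suc (length xs')" "enc T' = xs'"
        using less.hyps[of xs'] h1 xs by auto
      then obtain t ts where "T' = Node (t # ts)" using edges_pos_cases by force
      then show ?thesis using T' xs LA
        by (intro exI[of _ "Node (Node [] # t # ts)"]) simp
    next
      case LB
      then have "h = 0" using h2 by simp
      then obtain T' where T': "edges T' = Suc (length xs')" "enc T' = xs'"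
        using less.hyps[of xs'] h1 xs by auto
      then obtain t ts where "T' = Node (t # ts)" using edges_pos_cases by force
      then show ?thesis using T' xs LB
        by (intro exI[of _ "Node [Node (t # ts)]"]) simp
    next
      case LD
      then have "h = 1" using h2 by (cases h) auto
      then obtain ys zs where s: "xs' = ys @ LU # zs" "path 0 ys 0" "path 0 zs 0"
        using path_split[of xs' 0] h1 by auto
      obtain T1 where T1: "edges T1 = Suc (length ys)" "enc T1 = ys"
        using less.hyps[of ys] s xs by auto
      obtain T2 where T2: "edges T2 = Suc (length zs)" "enc T2 = zs"
        using less.hyps[of zs] s xs by auto
      obtain t ts where tt: "T1 = Node (t # ts)" using edges_pos_cases T1 by force
      obtain f fs where ff: "T2 = Node (f # fs)" using edges_pos_cases T2 by force
      show ?thesis using T1 T2 tt ff xs s LD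
        by (intro exI[of _ "Node (Node (f # fs) # t # ts)"]) simp
    qed
  qed
qed

lemma enc_bij:
  assumes "1 \<le> n"
  shows "bij_betw enc {T. edges T = n} {xs. length xs = n - 1 \<and> path 0 xs 0}"
  unfolding bij_betw_def
proof
  show "inj_on enc {T. edges T = n}" using enc_inj assms by (auto simp: inj_on_def)
  show "enc ` {T. edges T = n} = {xs. length xs = n - 1 \<and> path 0 xs 0}"
  proof
    show "enc ` {T. edges T = n} \<subseteq> {xs. length xs = n - 1 \<and> path 0 xs 0}"
      using enc_props assms by fastforce
    show "{xs. length xs = n - 1 \<and> path 0 xs 0} \<subseteq> enc ` {T. edges T = n}"
    proof
      fix xs assume "xs \<in> {xs. length xs = n - 1 \<and> path 0 xs 0}"
      then obtain T where "edges T = Suc (length xs)" "enc T = xs" "length xs = n - 1"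
        using enc_surj by blast
      then show "xs \<in> enc ` {T. edges T = n}" using assms by force
    qed
  qed
qed

fun tt :: "bool list \<Rightarrow> nat" where
  "tt (x # y # zs) = (if x \<and> y then 1 else 0) + tt (y # zs)"
| "tt _ = 0"

fun re :: "bool list \<Rightarrow> nat" where
  "re [] = 0"
| "re [x] = (if x then 1 else 0)"
| "re (x # y # zs) = (if x \<and> \<not> y then 1 else 0) + re (y # zs)"

lemma tt_app: "tt (xs @ y # ys) = tt xs + tt (y # ys) + (if xs \<noteq> [] \<and> last xs \<and> y then 1 else 0)"
proof (induction xs)
  case (Cons x xs) then show ?case by (cases xs) auto
qed simp

lemma re_app: "re (xs @ y # ys) + (if xs \<noteq> [] \<and> last xs \<and> y then 1 else 0) = re xs + re (y # ys)"
proof (induction xs)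
  case (Cons x xs) then show ?case by (cases xs) auto
qed simp

lemma last_prop:
  "1 \<le> edges T \<Longrightarrow> last (True # map wb (enc T)) = (children (hd (children T)) = [])"
  by (cases T rule: enc.cases) auto

lemma stats:
  "1 \<le> edges T \<Longrightarrow> young_leaves T = tt (True # map wb (enc T)) \<and>
      old_leaves T = re (True # map wb (enc T))"
proof (induction T rule: enc.induct)
  case (3 t ts)
  let ?x = "True # map wb (enc (Node (t # ts)))"
  have lp: "last ?x = (children t = [])" using last_prop[of "Node (t # ts)"] by simp
  have a: "tt (?x @ [True]) = tt ?x + (if children t = [] then 1 else 0)"
    using tt_app[of ?x True "[]"] lp by simp
  have b: "re (?x @ [True]) + (if children t = [] then 1 else 0) = re ?x + 1"
    using re_app[of ?x True "[]"] lp by simp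
  have IH: "young_leaves (Node (t # ts)) = tt ?x" "old_leaves (Node (t # ts)) = re ?x"
    using 3 by auto
  show ?case using a b IH by (cases t) auto
next
  case (4 f fs)
  let ?x = "True # map wb (enc (Node (f # fs)))"
  have a: "tt (?x @ [False]) = tt ?x" using tt_app[of ?x False "[]"] by simp
  have b: "re (?x @ [False]) = re ?x" using re_app[of ?x False "[]"] by simp
  have IH: "young_leaves (Node (f # fs)) = tt ?x" "old_leaves (Node (f # fs)) = re ?x"
    using 4 by auto
  show ?case using a b IH by simp
next
  case (5 f fs t ts)
  let ?x = "True # map wb (enc (Node (t # ts)))"
  let ?y = "True # map wb (enc (Node (f # fs)))"
  have lp: "last ?x = (children t = [])" using last_prop[of "Node (t # ts)"] by simp
  have e: "True # map wb (enc (Node (Node (f # fs) # t # ts))) = ?x @ (?y @ [False])" by simp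
  have a1: "tt (?y @ [False]) = tt ?y" using tt_app[of ?y False "[]"] by simp
  have b1: "re (?y @ [False]) = re ?y" using re_app[of ?y False "[]"] by simp
  have a: "tt (?x @ (?y @ [False])) = tt ?x + tt ?y + (if children t = [] then 1 else 0)"
    using tt_app[of ?x True "map wb (enc (Node (f # fs))) @ [False]"] lp a1 by simp
  have b: "re (?x @ (?y @ [False])) + (if children t = [] then 1 else 0) = re ?x + re ?y"
    using re_app[of ?x True "map wb (enc (Node (f # fs))) @ [False]"] lp b1 by simp
  have IH: "young_leaves (Node (t # ts)) = tt ?x" "old_leaves (Node (t # ts)) = re ?x"
    "young_leaves (Node (f # fs)) = tt ?y" "old_leaves (Node (f # fs)) = re ?y"
    using 5 by auto
  show ?case unfolding e using a b IH by (cases t) auto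
qed auto

definition rank :: "nat set \<Rightarrow> nat \<Rightarrow> nat" where
  "rank S x = card {y \<in> S. y \<le> x}"

definition incr :: "nat set \<Rightarrow> nat set \<Rightarrow> nat \<Rightarrow> nat" where
  "incr S T x = inv_into T (rank T) (rank S x)"

lemma rank_less:
  assumes "finite S" "x \<in> S" "y \<in> S" "x < y"
  shows "rank S x < rank S y"
  unfolding rank_def
proof (rule psubset_card_mono)
  show "finite {z \<in> S. z \<le> y}" using assms by simp
  have "y \<in> {z \<in> S. z \<le> y}" "y \<notin> {z \<in> S. z \<le> x}" using assms by auto
  then show "{z \<in> S. z \<le> x} \<subset> {z \<in> S. z \<le> y}"
  proof (intro psubsetI)
    show "{z \<in> S. z \<le> x} \<subseteq> {z \<in> S. z \<le> y}" using assms by auto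
  qed blast
qed

lemma rank_less_iff:
  assumes "finite S" "x \<in> S" "y \<in> S"
  shows "rank S x < rank S y \<longleftrightarrow> x < y"
  using rank_less[OF assms] rank_less[OF assms(1,3,2)]
  by (metis linorder_neqE_nat order_less_asym)

lemma rank_le_iff:
  assumes "finite S" "x \<in> S" "y \<in> S"
  shows "rank S x \<le> rank S y \<longleftrightarrow> x \<le> y"
  using rank_less_iff[OF assms(1,3,2)] by linarith

lemma rank_inj: "finite S \<Longrightarrow> inj_on (rank S) S"
  unfolding inj_on_def using rank_less_iff by (metis nat_neq_iff)

lemma rank_bij:
  assumes "finite S"
  shows "bij_betw (rank S) S {1..card S}"
proof -
  have sub: "rank S ` S \<subseteq> {1..card S}"
  proof
    fix r assume "r \<in> rank S ` S"
    then obtain x where x: "x \<in> S" "r = rank S x" by auto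
    have "{y \<in> S. y \<le> x} \<noteq> {}" using x by auto
    then have "0 < card {y \<in> S. y \<le> x}" using assms by (simp add: card_gt_0_iff)
    then have "1 \<le> card {y \<in> S. y \<le> x}" by simp
    moreover have "card {y \<in> S. y \<le> x} \<le> card S" using assms by (intro card_mono) auto
    ultimately show "r \<in> {1..card S}" using x by (simp add: rank_def)
  qed
  have "card (rank S ` S) = card S" using rank_inj[OF assms] by (simp add: card_image)
  then have "rank S ` S = {1..card S}" using sub by (intro card_subset_eq) auto
  then show ?thesis using rank_inj[OF assms] by (simp add: bij_betw_def)
qed

lemma incr_bij:
  assumes "finite S" "finite T" "card S = card T"
  shows "bij_betw (incr S T) S T"
proof -
  have "bij_betw (inv_into T (rank T)) {1..card S} T"
    using bij_betw_inv_into[OF rank_bij[OF assms(2)]] assms(3) by simp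
  then have "bij_betw (inv_into T (rank T) \<circ> rank S) S T"
    using bij_betw_trans[OF rank_bij[OF assms(1)]] by blast
  moreover have "incr S T = inv_into T (rank T) \<circ> rank S" by (rule ext) (simp add: incr_def)
  ultimately show ?thesis by simp
qed

lemma rank_incr:
  assumes "finite S" "finite T" "card S = card T" "x \<in> S"
  shows "rank T (incr S T x) = rank S x"
proof -
  have "rank S x \<in> rank T ` T"
    using rank_bij[OF assms(1)] rank_bij[OF assms(2)] assms(3,4)
    by (metis bij_betw_imp_surj_on imageI)
  then show ?thesis unfolding incr_def by (rule f_inv_into_f)
qed

lemma incr_mono:
  assumes "finite S" "finite T" "card S = card T" "x \<in> S" "y \<in> S" "x < y"
  shows "incr S T x < incr S T y"
proof -
  have "incr S T x \<in> T" "incr S T y \<in> T"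
    using incr_bij[OF assms(1-3)] assms(4,5) bij_betwE by blast+
  moreover have "rank T (incr S T x) < rank T (incr S T y)"
    using rank_incr[OF assms(1-3)] assms rank_less by simp
  ultimately show ?thesis using rank_less_iff assms(2) by blast
qed

lemma incr_unique:
  assumes "finite S" "finite T" "bij_betw f S T"
    and mono: "\<And>x y. x \<in> S \<Longrightarrow> y \<in> S \<Longrightarrow> x < y \<Longrightarrow> f x < f y"
    and "x \<in> S"
  shows "incr S T x = f x"
proof -
  have fx: "f x \<in> T" using assms(3,5) bij_betwE by blast
  have "{y \<in> T. y \<le> f x} = f ` {z \<in> S. z \<le> x}"
  proof
    show "{y \<in> T. y \<le> f x} \<subseteq> f ` {z \<in> S. z \<le> x}"
    proof
      fix y assume y: "y \<in> {y \<in> T. y \<le> f x}"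
      have "y \<in> f ` S" using y assms(3) bij_betw_imp_surj_on by blast
      then obtain z where z: "z \<in> S" "y = f z" by blast
      have "z \<le> x"
      proof (rule ccontr)
        assume "\<not> z \<le> x"
        then have "f x < f z" using mono[OF assms(5) z(1)] by simp
        then show False using y z by simp
      qed
      then show "y \<in> f ` {z \<in> S. z \<le> x}" using z by auto
    qed
    show "f ` {z \<in> S. z \<le> x} \<subseteq> {y \<in> T. y \<le> f x}"
    proof
      fix y assume "y \<in> f ` {z \<in> S. z \<le> x}"
      then obtain z where z: "z \<in> S" "z \<le> x" "y = f z" by blast
      have "f z \<le> f x"
      proof (cases "z = x")
        case False then show ?thesis using mono[OF z(1) assms(5)] z(2) by simp
      qed simp
      moreover have "f z \<in> T" using z(1) assms(3) bij_betwE by blast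
      ultimately show "y \<in> {y \<in> T. y \<le> f x}" using z by simp
    qed
  qed
  moreover have "inj_on f {z \<in> S. z \<le> x}"
    using inj_on_subset[OF bij_betw_imp_inj_on[OF assms(3)]] by auto
  ultimately have "rank T (f x) = rank S x" unfolding rank_def by (simp add: card_image)
  then show ?thesis unfolding incr_def
    using inv_into_f_f[OF rank_inj[OF assms(2)] fx] by simp
qed

definition perm_of :: "nat \<Rightarrow> nat set \<Rightarrow> nat set \<Rightarrow> nat \<Rightarrow> nat" where
  "perm_of n W V i = (if i \<in> W then incr W V i
     else if i \<in> {1..n} then incr ({1..n} - W) ({1..n} - V) i else i)"

lemma partition_card:
  assumes "W \<subseteq> {1..n}" "k \<le> n"
  shows "card {y \<in> W. y \<le> k} + card {y \<in> {1..n} - W. y \<le> k} = k"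
proof -
  have "{y \<in> W. y \<le> k} \<union> {y \<in> {1..n} - W. y \<le> k} = {1..k}" using assms by auto
  moreover have "card ({y \<in> W. y \<le> k} \<union> {y \<in> {1..n} - W. y \<le> k}) =
      card {y \<in> W. y \<le> k} + card {y \<in> {1..n} - W. y \<le> k}"
    using assms by (intro card_Un_disjoint) (auto intro: finite_subset)
  ultimately show ?thesis by simp
qed

lemma construct:
  assumes WS: "W \<subseteq> {1..n}" and VS: "V \<subseteq> {1..n}" and cWV: "card W = card V"
    and C: "\<forall>m<n. card {y \<in> V. y \<le> m} < card {y \<in> W. y \<le> Suc m}"
  shows "perm_of n W V permutes {1..n} \<and> avoids321 n (perm_of n W V) \<and>
     (\<forall>i\<in>{1..n}. i \<le> perm_of n W V i \<longleftrightarrow> i \<in> W) \<and> perm_of n W V ` W = V"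
proof -
  let ?p = "perm_of n W V"
  define D where "D = {1..n} - W"
  define U where "U = {1..n} - V"
  have fW: "finite W" and fV: "finite V" and fD: "finite D" and fU: "finite U"
    using WS VS finite_subset unfolding D_def U_def by auto
  have cDU: "card D = card U" unfolding D_def U_def
    using WS VS cWV by (simp add: card_Diff_subset finite_subset)
  have pW: "\<And>x. x \<in> W \<Longrightarrow> ?p x = incr W V x" by (simp add: perm_of_def)
  have pD: "\<And>x. x \<in> D \<Longrightarrow> ?p x = incr D U x" by (simp add: perm_of_def D_def U_def)
  have bW: "bij_betw ?p W V"
    using incr_bij[OF fW fV cWV] bij_betw_cong pW by blast
  have bD: "bij_betw ?p D U"
    using incr_bij[OF fD fU cDU] bij_betw_cong pD by blast
  have b: "bij_betw ?p (W \<union> D) (V \<union> U)"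
    by (rule bij_betw_combine[OF bW bD]) (auto simp: U_def)
  have "W \<union> D = {1..n}" "V \<union> U = {1..n}" using WS VS by (auto simp: D_def U_def)
  then have b': "bij_betw ?p {1..n} {1..n}" using b by simp
  have perm: "?p permutes {1..n}"
  proof (rule bij_imp_permutes[OF b'])
    fix x assume "x \<notin> {1..n}"
    then show "?p x = x" using WS by (auto simp: perm_of_def)
  qed
  have monoW: "\<And>x y. x \<in> W \<Longrightarrow> y \<in> W \<Longrightarrow> x < y \<Longrightarrow> ?p x < ?p y"
    using incr_mono[OF fW fV cWV] pW by simp
  have monoD: "\<And>x y. x \<in> D \<Longrightarrow> y \<in> D \<Longrightarrow> x < y \<Longrightarrow> ?p x < ?p y"
    using incr_mono[OF fD fU cDU] pD by simp
  have wexW: "i \<le> ?p i" if i: "i \<in> W" for i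
  proof (rule ccontr)
    assume "\<not> i \<le> ?p i"
    then have lt: "?p i < i" by simp
    have v: "?p i \<in> V" using bW i bij_betwE by blast
    have r: "rank V (?p i) = rank W i" using rank_incr[OF fW fV cWV i] pW[OF i] by simp
    have "?p i < n" using lt i WS by auto
    then have c1: "card {y \<in> V. y \<le> ?p i} < card {y \<in> W. y \<le> Suc (?p i)}" using C by simp
    have "card {y \<in> W. y \<le> Suc (?p i)} \<le> card {y \<in> W. y \<le> i}"
      using lt fW by (intro card_mono) auto
    then show False using c1 r unfolding rank_def by simp
  qed
  have wexD: "?p i < i" if i: "i \<in> D" for i
  proof (rule ccontr)
    assume "\<not> ?p i < i"
    then have le: "i \<le> ?p i" by simp
    have u: "?p i \<in> U" using bD i bij_betwE by blast
    have r: "rank U (?p i) = rank D i" using rank_incr[OF fD fU cDU i] pD[OF i] by simp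
    have i1: "1 \<le> i" "i \<le> n" using i by (auto simp: D_def)
    have c1: "card {y \<in> V. y \<le> i - 1} < card {y \<in> W. y \<le> i}"
      using C[rule_format, of "i - 1"] i1 by simp
    have p1: "card {y \<in> W. y \<le> i} + card {y \<in> D. y \<le> i} = i"
      using partition_card[OF WS i1(2)] by (simp add: D_def)
    have p2: "card {y \<in> V. y \<le> i - 1} + card {y \<in> U. y \<le> i - 1} = i - 1"
      using partition_card[OF VS, of "i - 1"] i1 by (simp add: U_def)
    have "{y \<in> U. y \<le> i - 1} \<subseteq> {y \<in> U. y \<le> ?p i} - {?p i}" using le i1 by auto
    then have "card {y \<in> U. y \<le> i - 1} \<le> card ({y \<in> U. y \<le> ?p i} - {?p i})"
      using fU by (intro card_mono) auto
    also have "\<dots> = rank U (?p i) - 1" using u fU unfolding rank_def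
      by (subst card_Diff_singleton) auto
    finally have c2: "card {y \<in> U. y \<le> i - 1} \<le> card {y \<in> D. y \<le> i} - 1"
      using r unfolding rank_def by simp
    have "card {y \<in> D. y \<le> i} \<ge> 1"
    proof -
      have "i \<in> {y \<in> D. y \<le> i}" using i by simp
      then have "{y \<in> D. y \<le> i} \<noteq> {}" by blast
      then show ?thesis using fD by (simp add: card_gt_0_iff Suc_le_eq)
    qed
    then show False using c1 c2 p1 p2 i1 by linarith
  qed
  have wex: "\<forall>i\<in>{1..n}. i \<le> ?p i \<longleftrightarrow> i \<in> W"
  proof
    fix i assume "i \<in> {1..n}"
    then have "i \<in> W \<or> i \<in> D" by (auto simp: D_def)
    then show "i \<le> ?p i \<longleftrightarrow> i \<in> W"
    proof
      assume "i \<in> D" then show ?thesis using wexD[of i] by (auto simp: D_def)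
    qed (use wexW in auto)
  qed
  have av: "avoids321 n ?p"
    unfolding avoids321_def
  proof
    assume "\<exists>a b c. 1 \<le> a \<and> a < b \<and> b < c \<and> c \<le> n \<and> ?p b < ?p a \<and> ?p c < ?p b"
    then obtain a b c where abc: "1 \<le> a" "a < b" "b < c" "c \<le> n" "?p b < ?p a" "?p c < ?p b"
      by blast
    have m: "a \<in> W \<or> a \<in> D" "b \<in> W \<or> b \<in> D" "c \<in> W \<or> c \<in> D"
      using abc by (auto simp: D_def)
    show False
    proof (cases "a \<in> W")
      case aW: True
      show False
      proof (cases "b \<in> W")
        case True then show False using monoW[OF aW True abc(2)] abc(5) by linarith
      next
        case False
        then have bD: "b \<in> D" using m by blast
        show False
        proof (cases "c \<in> W")
          case True then have "?p a < ?p c" using monoW[OF aW] abc by simp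
          then show False using abc by linarith
        next
          case False then have "c \<in> D" using m by blast
          then show False using monoD[OF bD _ abc(3)] abc(6) by linarith
        qed
      qed
    next
      case False
      then have aD: "a \<in> D" using m by blast
      show False
      proof (cases "b \<in> D")
        case True then show False using monoD[OF aD True abc(2)] abc(5) by linarith
      next
        case False
        then have bW: "b \<in> W" using m by blast
        show False
        proof (cases "c \<in> W")
          case True then show False using monoW[OF bW True abc(3)] abc(6) by linarith
        next
          case False then have "c \<in> D" using m by blast
          then have "?p a < ?p c" using monoD[OF aD] abc by simp
          then show False using abc by linarith
        qed
      qed
    qed
  qed
  have "?p ` W = V" using bW by (simp add: bij_betw_def)
  then show ?thesis using perm av wex by blast
qed

lemma card_pre:
  assumes "p permutes {1..n}"
  shows "card {m \<in> {1..n}. p m \<in> A} = card (A \<inter> {1..(n::nat)})"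
proof -
  have "p ` {m \<in> {1..n}. p m \<in> A} = A \<inter> {1..n}"
  proof
    show "p ` {m \<in> {1..n}. p m \<in> A} \<subseteq> A \<inter> {1..n}"
    proof
      fix x assume "x \<in> p ` {m \<in> {1..n}. p m \<in> A}"
      then obtain m where m: "m \<in> {1..n}" "p m \<in> A" "x = p m" by blast
      then have "p m \<in> {1..n}" using permutes_in_image[OF assms] by simp
      then show "x \<in> A \<inter> {1..n}" using m by simp
    qed
    show "A \<inter> {1..n} \<subseteq> p ` {m \<in> {1..n}. p m \<in> A}"
    proof
      fix x assume x: "x \<in> A \<inter> {1..n}"
      then have "x \<in> p ` {1..n}" using permutes_image[OF assms] by simp
      then obtain m where "m \<in> {1..n}" "x = p m" by blast
      then show "x \<in> p ` {m \<in> {1..n}. p m \<in> A}" using x by blast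
    qed
  qed
  moreover have "inj_on p {m \<in> {1..n}. p m \<in> A}"
    using permutes_inj_on[OF assms] .
  ultimately show ?thesis by (metis card_image)
qed

lemma p_range:
  assumes "p permutes {1..n}" "i \<in> {1..n}"
  shows "p i \<in> {1..(n::nat)}"
  using assms(2) by (simp only: permutes_in_image[OF assms(1)])

lemma monoW321:
  assumes p: "p permutes {1..n}" and av: "avoids321 n p"
    and i: "i \<in> {1..n}" "i \<le> p i" and j: "j \<in> {1..n}" "j \<le> p j" and ij: "i < j"
  shows "p i < p j"
proof (rule ccontr)
  assume "\<not> p i < p j"
  moreover have "p i \<noteq> p j" using ij permutes_inj[OF p] by (metis inj_eq nat_neq_iff)
  ultimately have lt: "p j < p i" by simp
  define P where "P = {m \<in> {1..n}. p m \<in> {..<p j}}"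
  have pj: "p j \<in> {1..n}" using p_range[OF p j(1)] .
  have "{..<p j} \<inter> {1..n} = {1..<p j}" using pj by auto
  then have cP: "card P = p j - 1" using card_pre[OF p, of "{..<p j}"] unfolding P_def by simp
  have "\<exists>m\<in>P. j < m"
  proof (rule ccontr)
    assume "\<not> (\<exists>m\<in>P. j < m)"
    then have "P \<subseteq> {1..j} - {i, j}" using lt unfolding P_def by auto
    then have "card P \<le> card ({1..j} - {i, j})" by (intro card_mono) auto
    also have "\<dots> = j - 2" using i ij by (subst card_Diff_subset) auto
    finally have "card P \<le> j - 2" .
    moreover have "1 \<le> i" using i by simp
    ultimately show False using cP j(2) ij by linarith
  qed
  then obtain m where m: "m \<in> P" "j < m" by blast
  then have "1 \<le> i \<and> i < j \<and> j < m \<and> m \<le> n \<and> p j < p i \<and> p m < p j"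
    using i ij lt unfolding P_def by auto
  then show False using av unfolding avoids321_def by blast
qed

lemma monoD321:
  assumes p: "p permutes {1..n}" and av: "avoids321 n p"
    and i: "i \<in> {1..n}" "p i < i" and j: "j \<in> {1..n}" "p j < j" and ij: "i < j"
  shows "p i < p j"
proof (rule ccontr)
  assume "\<not> p i < p j"
  moreover have "p i \<noteq> p j" using ij permutes_inj[OF p] by (metis inj_eq nat_neq_iff)
  ultimately have lt: "p j < p i" by simp
  define Q where "Q = {m \<in> {1..n}. p m \<in> {p i<..}}"
  have pii: "p i \<in> {1..n}" using p_range[OF p i(1)] .
  have "{p i<..} \<inter> {1..n} = {p i<..n}" using pii by auto
  then have cQ: "card Q = n - p i" using card_pre[OF p, of "{p i<..}"] unfolding Q_def by simp
  have "\<exists>m\<in>Q. m < i"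
  proof (rule ccontr)
    assume "\<not> (\<exists>m\<in>Q. m < i)"
    then have "Q \<subseteq> {i..n} - {i, j}" using lt unfolding Q_def by auto
    then have "card Q \<le> card ({i..n} - {i, j})" by (intro card_mono) auto
    also have "\<dots> = Suc n - i - 2" using i j ij by (subst card_Diff_subset) auto
    finally have "card Q \<le> Suc n - i - 2" .
    moreover have "j \<le> n" using j by simp
    ultimately show False using cQ i(2) ij by linarith
  qed
  then obtain m where m: "m \<in> Q" "m < i" by blast
  then have "1 \<le> m \<and> m < i \<and> i < j \<and> j \<le> n \<and> p i < p m \<and> p j < p i"
    using j ij lt unfolding Q_def by auto
  then show False using av unfolding avoids321_def by blast
qed

lemma perm_facts:
  assumes p: "p permutes {1..n}" and av: "avoids321 n p" and n: "1 \<le> n"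
  defines "W \<equiv> {i \<in> {1..n}. i \<le> p i}"
  defines "V \<equiv> p ` W"
  shows "W \<subseteq> {1..n} \<and> V \<subseteq> {1..n} \<and> card W = card V \<and>
     (\<forall>m<n. card {y \<in> V. y \<le> m} < card {y \<in> W. y \<le> Suc m}) \<and> 1 \<in> W \<and> n \<in> V \<and>
     perm_of n W V = p"
proof -
  define D where "D = {1..n} - W"
  have WS: "W \<subseteq> {1..n}" unfolding W_def by auto
  have VS: "V \<subseteq> {1..n}" unfolding V_def using WS p_range[OF p] by auto
  have inj: "inj p" using permutes_inj[OF p] .
  have cWV: "card W = card V" unfolding V_def using inj
    by (metis card_image inj_on_subset subset_UNIV)
  have C: "\<forall>m<n. card {y \<in> V. y \<le> m} < card {y \<in> W. y \<le> Suc m}"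
  proof (intro allI impI)
    fix m assume m: "m < n"
    have e1: "{y \<in> V. y \<le> m} = p ` {i \<in> W. p i \<le> m}" unfolding V_def by auto
    have c1: "card {y \<in> V. y \<le> m} = card {i \<in> W. p i \<le> m}"
      unfolding e1 using inj by (metis card_image inj_on_subset subset_UNIV)
    define A where "A = {i \<in> {1..n}. p i \<in> {..m}}"
    have e2: "{..m} \<inter> {1..n} = {1..m}" using m by auto
    have "card ({..m} \<inter> {1..n}) = m" by (subst e2) simp
    then have cA: "card A = m" using card_pre[OF p, of "{..m}"] unfolding A_def by linarith
    have sub: "{i \<in> W. p i \<le> m} \<union> {y \<in> D. y \<le> Suc m} \<subseteq> A"
      unfolding A_def D_def W_def by auto
    have "card ({i \<in> W. p i \<le> m} \<union> {y \<in> D. y \<le> Suc m}) =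
        card {i \<in> W. p i \<le> m} + card {y \<in> D. y \<le> Suc m}"
      by (rule card_Un_disjoint) (auto simp: W_def D_def)
    moreover have "card ({i \<in> W. p i \<le> m} \<union> {y \<in> D. y \<le> Suc m}) \<le> card A"
      using sub by (intro card_mono) (auto simp: A_def)
    moreover have "card {y \<in> W. y \<le> Suc m} + card {y \<in> D. y \<le> Suc m} = Suc m"
      using partition_card[OF WS, of "Suc m"] m by (simp add: D_def)
    ultimately show "card {y \<in> V. y \<le> m} < card {y \<in> W. y \<le> Suc m}"
      using c1 cA by linarith
  qed
  have one: "1 \<in> W" using p_range[OF p, of 1] n unfolding W_def by auto
  have "n \<in> p ` {1..n}" using permutes_image[OF p] n by auto
  then obtain j where j: "j \<in> {1..n}" "p j = n" by blast
  then have "j \<in> W" by (simp add: W_def)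
  then have nV: "n \<in> V" unfolding V_def using j(2) by (metis imageI)
  have eq: "perm_of n W V = p"
  proof
    fix i
    show "perm_of n W V i = p i"
    proof (cases "i \<in> W")
      case True
      have bW: "bij_betw p W V" unfolding V_def bij_betw_def
        using inj_on_subset[OF inj subset_UNIV] by simp
      have mono: "\<And>x y. x \<in> W \<Longrightarrow> y \<in> W \<Longrightarrow> x < y \<Longrightarrow> p x < p y"
        using monoW321[OF p av] unfolding W_def by blast
      have "incr W V i = p i"
        using incr_unique[OF finite_subset[OF WS] finite_subset[OF VS] bW mono True] by simp
      then show ?thesis using True by (simp add: perm_of_def)
    next
      case False
      show ?thesis
      proof (cases "i \<in> {1..n}")
        case True
        have "p ` D = {1..n} - V" unfolding D_def V_def
          using image_set_diff[OF inj] permutes_image[OF p] by simp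
        then have bD: "bij_betw p D ({1..n} - V)" unfolding bij_betw_def
          using inj_on_subset[OF inj subset_UNIV] by simp
        have iD: "i \<in> D" using True False by (simp add: D_def)
        have mono: "p x < p y" if "x \<in> D" "y \<in> D" "x < y" for x y
        proof -
          have "x \<in> {1..n}" "p x < x" "y \<in> {1..n}" "p y < y"
            using that by (auto simp: D_def W_def)
          then show ?thesis using monoD321[OF p av] that(3) by blast
        qed
        have fD: "finite D" "finite ({1..n} - V)" by (auto simp: D_def)
        have "incr D ({1..n} - V) i = p i"
          using incr_unique[OF fD bD mono iD] by simp
        then show ?thesis using True False by (simp add: perm_of_def D_def)
      next
        case False
        then show ?thesis using permutes_not_in[OF p False] WS by (auto simp: perm_of_def)
      qed
    qed
  qed
  show ?thesis using WS VS cWV C one nV eq by blast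
qed

definition WS :: "letter list \<Rightarrow> nat set" where
  "WS xs = {i. 1 \<le> i \<and> i \<le> Suc (length xs) \<and> (i = 1 \<or> wb (xs ! (i - 2)))}"

definition VS :: "letter list \<Rightarrow> nat set" where
  "VS xs = {i. 1 \<le> i \<and> i \<le> Suc (length xs) \<and> (i = Suc (length xs) \<or> vb (xs ! (i - 1)))}"

lemma WS_sub: "WS xs \<subseteq> {1..Suc (length xs)}" by (auto simp: WS_def)
lemma VS_sub: "VS xs \<subseteq> {1..Suc (length xs)}" by (auto simp: VS_def)

lemma card_le_Suc:
  assumes "finite S"
  shows "card {y \<in> S. y \<le> Suc m} = card {y \<in> S. y \<le> m} + (if Suc m \<in> S then 1 else 0)"
proof (cases "Suc m \<in> S")
  case True
  then have "{y \<in> S. y \<le> Suc m} = insert (Suc m) {y \<in> S. y \<le> m}" by auto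
  then show ?thesis using True assms by simp
next
  case False
  then have "{y \<in> S. y \<le> Suc m} = {y \<in> S. y \<le> m}" using le_Suc_eq by auto
  then show ?thesis using False by simp
qed

lemma cntW:
  "k \<le> length xs \<Longrightarrow> card {y \<in> WS xs. y \<le> Suc k} = Suc (length (filter wb (take k xs)))"
proof (induction k)
  case 0
  have "{y \<in> WS xs. y \<le> Suc 0} = {1}" by (auto simp: WS_def)
  then show ?case by simp
next
  case (Suc k)
  have f: "finite (WS xs)" using WS_sub finite_subset by blast
  have "Suc (Suc k) \<in> WS xs \<longleftrightarrow> wb (xs ! k)" using Suc.prems by (simp add: WS_def)
  then show ?case using card_le_Suc[OF f, of "Suc k"] Suc
    by (simp add: take_Suc_conv_app_nth)
qed

lemma cntV:
  "k \<le> length xs \<Longrightarrow> card {y \<in> VS xs. y \<le> k} = length (filter vb (take k xs))"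
proof (induction k)
  case 0
  have "{y \<in> VS xs. y \<le> 0} = {}" by (auto simp: VS_def)
  then show ?case by simp
next
  case (Suc k)
  have f: "finite (VS xs)" using VS_sub finite_subset by blast
  have "Suc k \<in> VS xs \<longleftrightarrow> vb (xs ! k)" using Suc.prems by (simp add: VS_def)
  then show ?case using card_le_Suc[OF f, of k] Suc
    by (simp add: take_Suc_conv_app_nth)
qed

lemma card_WS: "card (WS xs) = Suc (length (filter wb xs))"
proof -
  have "{y \<in> WS xs. y \<le> Suc (length xs)} = WS xs" by (auto simp: WS_def)
  then show ?thesis using cntW[of "length xs" xs] by simp
qed

lemma card_VS: "card (VS xs) = Suc (length (filter vb xs))"
proof -
  have f: "finite (VS xs)" using VS_sub finite_subset by blast
  have "{y \<in> VS xs. y \<le> Suc (length xs)} = VS xs" by (auto simp: VS_def)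
  moreover have "Suc (length xs) \<in> VS xs" by (simp add: VS_def)
  ultimately show ?thesis using cntV[of "length xs" xs] card_le_Suc[OF f, of "length xs"] by simp
qed

lemma allSuc: "(\<forall>k\<le>Suc n. Q k) \<longleftrightarrow> Q 0 \<and> (\<forall>k\<le>n. Q (Suc k))"
  by (metis Suc_le_mono le0 not0_implies_Suc)

lemma path_iff:
  "path h xs h' \<longleftrightarrow>
    (\<forall>k\<le>length xs. length (filter vb (take k xs)) \<le> h + length (filter wb (take k xs))) \<and>
    h + length (filter wb xs) = h' + length (filter vb xs)"
proof (induction xs arbitrary: h)
  case Nil then show ?case by simp
next
  case (Cons x xs)
  show ?case
  proof (cases x)
    case LU then show ?thesis using Cons.IH[of "Suc h"] by (simp add: allSuc)
  next
    case LA then show ?thesis using Cons.IH[of h] by (simp add: allSuc)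
  next
    case LB then show ?thesis using Cons.IH[of h] by (simp add: allSuc)
  next
    case LD
    show ?thesis
    proof (cases h)
      case 0 then show ?thesis using LD by (simp add: allSuc) (intro disjI1 exI[of _ 0], simp)
    next
      case (Suc h0)
      then show ?thesis using LD Cons.IH[of h0] by (simp add: allSuc)
    qed
  qed
qed

definition G :: "letter list \<Rightarrow> nat \<Rightarrow> nat" where
  "G xs = perm_of (Suc (length xs)) (WS xs) (VS xs)"

lemma G_props:
  assumes "path 0 xs 0"
  shows "G xs \<in> perms321 (Suc (length xs)) \<and>
     (\<forall>i\<in>{1..Suc (length xs)}. weak_exc (G xs) i \<longleftrightarrow> i \<in> WS xs) \<and> G xs ` WS xs = VS xs"
proof -
  let ?n = "Suc (length xs)"
  have pi: "\<forall>k\<le>length xs. length (filter vb (take k xs)) \<le> length (filter wb (take k xs))"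
    "length (filter wb xs) = length (filter vb xs)"
    using assms path_iff[of 0 xs 0] by auto
  have C: "\<forall>m<?n. card {y \<in> VS xs. y \<le> m} < card {y \<in> WS xs. y \<le> Suc m}"
  proof (intro allI impI)
    fix m assume "m < ?n"
    then have "m \<le> length xs" by simp
    then show "card {y \<in> VS xs. y \<le> m} < card {y \<in> WS xs. y \<le> Suc m}"
      using cntV cntW pi(1) by (simp add: le_imp_less_Suc)
  qed
  have cc: "card (WS xs) = card (VS xs)" using card_WS card_VS pi(2) by simp
  have "G xs permutes {1..?n} \<and> avoids321 ?n (G xs) \<and>
     (\<forall>i\<in>{1..?n}. i \<le> G xs i \<longleftrightarrow> i \<in> WS xs) \<and> G xs ` WS xs = VS xs"
    unfolding G_def by (rule construct[OF WS_sub VS_sub cc C])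
  then show ?thesis by (simp add: perms321_def weak_exc_def)
qed

lemma letter_eq: "wb a = wb b \<Longrightarrow> vb a = vb b \<Longrightarrow> a = b"
  by (cases a; cases b; simp)

lemma WS_VS_inj:
  assumes "length xs = length ys" "WS xs = WS ys" "VS xs = VS ys"
  shows "xs = ys"
proof (rule nth_equalityI)
  show "length xs = length ys" by fact
  fix k assume k: "k < length xs"
  have "wb (xs ! k) \<longleftrightarrow> Suc (Suc k) \<in> WS xs" using k by (simp add: WS_def)
  moreover have "wb (ys ! k) \<longleftrightarrow> Suc (Suc k) \<in> WS ys" using k assms(1) by (simp add: WS_def)
  moreover have "vb (xs ! k) \<longleftrightarrow> Suc k \<in> VS xs" using k by (simp add: VS_def)
  moreover have "vb (ys ! k) \<longleftrightarrow> Suc k \<in> VS ys" using k assms(1) by (simp add: VS_def)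
  ultimately show "xs ! k = ys ! k" using assms(2,3) letter_eq by metis
qed

fun mk :: "bool \<Rightarrow> bool \<Rightarrow> letter" where
  "mk True False = LU" | "mk True True = LA" | "mk False True = LD" | "mk False False = LB"

lemma wb_mk: "wb (mk a b) = a" and vb_mk: "vb (mk a b) = b"
  by (cases a; cases b; simp)+

lemma G_bij:
  assumes n: "1 \<le> n"
  shows "bij_betw G {xs. length xs = n - 1 \<and> path 0 xs 0} (perms321 n)"
  unfolding bij_betw_def
proof (intro conjI)
  show "inj_on G {xs. length xs = n - 1 \<and> path 0 xs 0}"
  proof (rule inj_onI)
    fix xs ys
    assume xs: "xs \<in> {xs. length xs = n - 1 \<and> path 0 xs 0}"
      and ys: "ys \<in> {xs. length xs = n - 1 \<and> path 0 xs 0}" and e: "G xs = G ys"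
    have l: "length xs = length ys" using xs ys by simp
    have px: "\<forall>i\<in>{1..Suc (length xs)}. weak_exc (G xs) i \<longleftrightarrow> i \<in> WS xs" "G xs ` WS xs = VS xs"
      using G_props xs by auto
    have py: "\<forall>i\<in>{1..Suc (length xs)}. weak_exc (G ys) i \<longleftrightarrow> i \<in> WS ys" "G ys ` WS ys = VS ys"
      using G_props ys l by auto
    have "WS xs = WS ys"
    proof (intro set_eqI)
      fix i
      show "i \<in> WS xs \<longleftrightarrow> i \<in> WS ys"
      proof (cases "i \<in> {1..Suc (length xs)}")
        case True
        then show ?thesis using px(1) py(1) e by simp
      next
        case False
        then show ?thesis using WS_sub[of xs] WS_sub[of ys] l by auto
      qed
    qed
    moreover then have "VS xs = VS ys" using px(2) py(2) e by simp
    ultimately show "xs = ys" using WS_VS_inj l by blast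
  qed
  show "G ` {xs. length xs = n - 1 \<and> path 0 xs 0} = perms321 n"
  proof
    show "G ` {xs. length xs = n - 1 \<and> path 0 xs 0} \<subseteq> perms321 n"
    proof
      fix p assume "p \<in> G ` {xs. length xs = n - 1 \<and> path 0 xs 0}"
      then obtain xs where xs: "length xs = n - 1" "path 0 xs 0" "p = G xs" by blast
      have "Suc (length xs) = n" using xs n by simp
      then show "p \<in> perms321 n" using G_props[OF xs(2)] xs(3) by simp
    qed
    show "perms321 n \<subseteq> G ` {xs. length xs = n - 1 \<and> path 0 xs 0}"
    proof
      fix p assume "p \<in> perms321 n"
      then have p: "p permutes {1..n}" "avoids321 n p" by (auto simp: perms321_def)
      define W where "W = {i \<in> {1..n}. i \<le> p i}"
      define V where "V = p ` W"
      have F: "W \<subseteq> {1..n} \<and> V \<subseteq> {1..n} \<and> card W = card V \<and>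
        (\<forall>m<n. card {y \<in> V. y \<le> m} < card {y \<in> W. y \<le> Suc m}) \<and> 1 \<in> W \<and> n \<in> V \<and>
        perm_of n W V = p"
        using perm_facts[OF p n] unfolding W_def V_def by blast
      define xs where "xs = map (\<lambda>k. mk (Suc (Suc k) \<in> W) (Suc k \<in> V)) [0..<n - 1]"
      have lx: "length xs = n - 1" and nx: "Suc (length xs) = n" using n by (auto simp: xs_def)
      have WSx: "WS xs = W"
      proof
        show "WS xs \<subseteq> W"
        proof
          fix i assume i: "i \<in> WS xs"
          show "i \<in> W"
          proof (cases "i = 1")
            case True then show ?thesis using F by simp
          next
            case False
            then have a: "2 \<le> i" "i \<le> n" "wb (xs ! (i - 2))" using i nx by (auto simp: WS_def)
            then have "i - 2 < n - 1" "Suc (Suc (i - 2)) = i" by auto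
            then show ?thesis using a(3) by (simp add: xs_def wb_mk)
          qed
        qed
        show "W \<subseteq> WS xs"
        proof
          fix i assume i: "i \<in> W"
          then have a: "1 \<le> i" "i \<le> n" using F by auto
          show "i \<in> WS xs"
          proof (cases "i = 1")
            case True then show ?thesis using nx by (simp add: WS_def)
          next
            case False
            then have "i - 2 < n - 1" "Suc (Suc (i - 2)) = i" using a by auto
            then have "wb (xs ! (i - 2))" using i by (simp add: xs_def wb_mk)
            then show ?thesis using a nx by (simp add: WS_def)
          qed
        qed
      qed
      have VSx: "VS xs = V"
      proof
        show "VS xs \<subseteq> V"
        proof
          fix i assume i: "i \<in> VS xs"
          show "i \<in> V"
          proof (cases "i = n")
            case True then show ?thesis using F by simp
          next
            case False
            then have a: "1 \<le> i" "i < n" "vb (xs ! (i - 1))" using i nx by (auto simp: VS_def)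
            then have "i - 1 < n - 1" "Suc (i - 1) = i" by auto
            then show ?thesis using a(3) by (simp add: xs_def vb_mk)
          qed
        qed
        show "V \<subseteq> VS xs"
        proof
          fix i assume i: "i \<in> V"
          then have a: "1 \<le> i" "i \<le> n" using F by auto
          show "i \<in> VS xs"
          proof (cases "i = n")
            case True then show ?thesis using nx a by (simp add: VS_def)
          next
            case False
            then have "i - 1 < n - 1" "Suc (i - 1) = i" using a by auto
            then have "vb (xs ! (i - 1))" using i by (simp add: xs_def vb_mk)
            then show ?thesis using a nx by (simp add: VS_def)
          qed
        qed
      qed
      have "path 0 xs 0"
        unfolding path_iff
      proof (intro conjI allI impI)
        fix k assume k: "k \<le> length xs"
        have "card {y \<in> V. y \<le> k} < card {y \<in> W. y \<le> Suc k}" using F k nx by auto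
        then show "length (filter vb (take k xs)) \<le> 0 + length (filter wb (take k xs))"
          using cntV[OF k] cntW[OF k] WSx VSx by simp
      next
        show "0 + length (filter wb xs) = 0 + length (filter vb xs)"
          using card_WS[of xs] card_VS[of xs] WSx VSx F by simp
      qed
      moreover have "G xs = p" unfolding G_def using nx WSx VSx F by simp
      ultimately show "p \<in> G ` {xs. length xs = n - 1 \<and> path 0 xs 0}" using lx by blast
    qed
  qed
qed

lemma tt_card: "tt bs = card {j. Suc j < length bs \<and> bs ! j \<and> bs ! Suc j}"
proof (induction bs rule: tt.induct)
  case (1 x y zs)
  let ?S = "{j. Suc j < length (y # zs) \<and> (y # zs) ! j \<and> (y # zs) ! Suc j}"
  have e: "{j. Suc j < length (x # y # zs) \<and> (x # y # zs) ! j \<and> (x # y # zs) ! Suc j} =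
      (if x \<and> y then {0} else {}) \<union> Suc ` ?S"
  proof (rule set_eqI)
    fix j
    show "j \<in> {j. Suc j < length (x # y # zs) \<and> (x # y # zs) ! j \<and> (x # y # zs) ! Suc j} \<longleftrightarrow>
        j \<in> (if x \<and> y then {0} else {}) \<union> Suc ` ?S"
      by (cases j) (auto simp: inj_image_mem_iff[OF inj_Suc])
  qed
  have "card ((if x \<and> y then {0} else {}) \<union> Suc ` ?S) =
      card (if x \<and> y then {0::nat} else {}) + card (Suc ` ?S)"
    by (rule card_Un_disjoint) auto
  then show ?case using "1" e by (simp add: card_image)
qed auto

lemma re_card: "re bs = card {j. j < length bs \<and> bs ! j \<and> (Suc j = length bs \<or> \<not> bs ! Suc j)}"
proof (induction bs rule: re.induct)
  case (2 x)
  have "{j. j < length [x] \<and> [x] ! j \<and> (Suc j = length [x] \<or> \<not> [x] ! Suc j)} =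
      (if x then {0} else {})" by auto
  then show ?case by simp
next
  case (3 x y zs)
  let ?S = "{j. j < length (y # zs) \<and> (y # zs) ! j \<and> (Suc j = length (y # zs) \<or> \<not> (y # zs) ! Suc j)}"
  have e: "{j. j < length (x # y # zs) \<and> (x # y # zs) ! j \<and>
      (Suc j = length (x # y # zs) \<or> \<not> (x # y # zs) ! Suc j)} =
      (if x \<and> \<not> y then {0} else {}) \<union> Suc ` ?S"
  proof (rule set_eqI)
    fix j
    show "j \<in> {j. j < length (x # y # zs) \<and> (x # y # zs) ! j \<and>
      (Suc j = length (x # y # zs) \<or> \<not> (x # y # zs) ! Suc j)} \<longleftrightarrow>
        j \<in> (if x \<and> \<not> y then {0} else {}) \<union> Suc ` ?S"
      by (cases j) (auto simp: inj_image_mem_iff[OF inj_Suc])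
  qed
  have "card ((if x \<and> \<not> y then {0} else {}) \<union> Suc ` ?S) =
      card (if x \<and> \<not> y then {0::nat} else {}) + card (Suc ` ?S)"
    by (rule card_Un_disjoint) auto
  then show ?case using "3" e by (simp add: card_image)
qed auto

lemma young_set:
  assumes l: "length bs = n" and P: "\<forall>i\<in>{1..n}. P i \<longleftrightarrow> bs ! (i - 1)"
  shows "card {i \<in> {1..n-1}. P i \<and> P (i+1)} = tt bs"
proof -
  let ?S = "{j. Suc j < length bs \<and> bs ! j \<and> bs ! Suc j}"
  have "{i \<in> {1..n-1}. P i \<and> P (i+1)} = Suc ` ?S"
  proof
    show "{i \<in> {1..n-1}. P i \<and> P (i+1)} \<subseteq> Suc ` ?S"
    proof
      fix i assume i: "i \<in> {i \<in> {1..n-1}. P i \<and> P (i+1)}"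
      then have a: "1 \<le> i" "i + 1 \<le> n" by auto
      then have "bs ! (i - 1)" "bs ! i" using P i by auto
      then have "i - 1 \<in> ?S" using a l by auto
      moreover have "i = Suc (i - 1)" using a by simp
      ultimately show "i \<in> Suc ` ?S" by blast
    qed
    show "Suc ` ?S \<subseteq> {i \<in> {1..n-1}. P i \<and> P (i+1)}"
    proof
      fix i assume "i \<in> Suc ` ?S"
      then obtain j where j: "i = Suc j" "Suc j < length bs" "bs ! j" "bs ! Suc j" by blast
      then have "P (Suc j)" "P (Suc (Suc j))" using P l by auto
      then show "i \<in> {i \<in> {1..n-1}. P i \<and> P (i+1)}" using j l by auto
    qed
  qed
  then show ?thesis by (simp add: card_image tt_card)
qed

lemma old_set:
  assumes l: "length bs = n" and P: "\<forall>i\<in>{1..n}. P i \<longleftrightarrow> bs ! (i - 1)"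
  shows "card {i \<in> {1..n}. P i \<and> (i = n \<or> \<not> P (i+1))} = re bs"
proof -
  let ?S = "{j. j < length bs \<and> bs ! j \<and> (Suc j = length bs \<or> \<not> bs ! Suc j)}"
  have "{i \<in> {1..n}. P i \<and> (i = n \<or> \<not> P (i+1))} = Suc ` ?S"
  proof
    show "{i \<in> {1..n}. P i \<and> (i = n \<or> \<not> P (i+1))} \<subseteq> Suc ` ?S"
    proof
      fix i assume i: "i \<in> {i \<in> {1..n}. P i \<and> (i = n \<or> \<not> P (i+1))}"
      then have a: "1 \<le> i" "i \<le> n" by auto
      have "bs ! (i - 1)" using P i by auto
      moreover have "i = n \<or> \<not> bs ! i"
      proof (cases "i = n")
        case False
        then have "i + 1 \<in> {1..n}" using a by auto
        then show ?thesis using P i by auto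
      qed simp
      ultimately have "i - 1 \<in> ?S" using a l by auto
      moreover have "i = Suc (i - 1)" using a by simp
      ultimately show "i \<in> Suc ` ?S" by blast
    qed
    show "Suc ` ?S \<subseteq> {i \<in> {1..n}. P i \<and> (i = n \<or> \<not> P (i+1))}"
    proof
      fix i assume "i \<in> Suc ` ?S"
      then obtain j where j: "i = Suc j" "j < length bs" "bs ! j"
        "Suc j = length bs \<or> \<not> bs ! Suc j" by blast
      then have "P (Suc j)" using P l by auto
      moreover have "Suc j = n \<or> \<not> P (Suc (Suc j))"
      proof (cases "Suc j = n")
        case False
        then have "Suc (Suc j) \<in> {1..n}" "\<not> bs ! Suc j" using j l by auto
        then show ?thesis using P by auto
      qed simp
      ultimately show "i \<in> {i \<in> {1..n}. P i \<and> (i = n \<or> \<not> P (i+1))}" using j l by auto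
    qed
  qed
  then show ?thesis by (simp add: card_image re_card)
qed

lemma WS_nth:
  "i \<in> WS xs \<longleftrightarrow> 1 \<le> i \<and> i \<le> Suc (length xs) \<and> (True # map wb xs) ! (i - 1)"
proof (cases "i \<le> 1")
  case True then show ?thesis by (auto simp: WS_def)
next
  case False
  then have "i - 1 = Suc (i - 2)" by simp
  then show ?thesis using False by (auto simp: WS_def)
qed

theorem mainTheorem10:
  fixes n :: nat
  assumes "n \<ge> 1"
  shows "\<exists>\<phi>. bij_betw \<phi> {T. edges T = n} (perms321 n) \<and>
    (\<forall>T. edges T = n \<longrightarrow>
       young_leaves T = card {i \<in> {1..n-1}. weak_exc (\<phi> T) i \<and> weak_exc (\<phi> T) (i+1)} \<and>
       old_leaves T = card {i \<in> {1..n}. weak_exc (\<phi> T) i \<and>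
                                     (i = n \<or> \<not> weak_exc (\<phi> T) (i+1))})"
proof (intro exI conjI allI impI)
  show "bij_betw (G \<circ> enc) {T. edges T = n} (perms321 n)"
    using bij_betw_trans[OF enc_bij[OF assms] G_bij[OF assms]] .
next
  fix T assume T: "edges T = n"
  let ?xs = "enc T"
  let ?bs = "True # map wb ?xs"
  have ep: "path 0 ?xs 0" "Suc (length ?xs) = n" using enc_props[of T] T assms by auto
  have lb: "length ?bs = n" using ep by simp
  have we: "\<forall>i\<in>{1..n}. weak_exc ((G \<circ> enc) T) i \<longleftrightarrow> ?bs ! (i - 1)"
  proof
    fix i assume i: "i \<in> {1..n}"
    have "weak_exc (G ?xs) i \<longleftrightarrow> i \<in> WS ?xs" using G_props[OF ep(1)] ep(2) i by auto
    also have "\<dots> \<longleftrightarrow> ?bs ! (i - 1)" using WS_nth[of i ?xs] i ep(2) by auto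
    finally show "weak_exc ((G \<circ> enc) T) i \<longleftrightarrow> ?bs ! (i - 1)" by simp
  qed
  have st: "young_leaves T = tt ?bs" "old_leaves T = re ?bs" using stats[of T] T assms by auto
  show "young_leaves T = card {i \<in> {1..n-1}. weak_exc ((G \<circ> enc) T) i \<and>
      weak_exc ((G \<circ> enc) T) (i+1)}"
    using young_set[OF lb we] st by simp
  show "old_leaves T = card {i \<in> {1..n}. weak_exc ((G \<circ> enc) T) i \<and>
      (i = n \<or> \<not> weak_exc ((G \<circ> enc) T) (i+1))}"
    using old_set[OF lb we] st by simp
qed

end
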